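(* Let $r\le s$, $M$ the space of complex $r\times s$ matrices, $D_k\subset M$ the variety of matrices of rank at most $k$ ($0\le k<r$), and $p\ge0$ an integer. The contact locus $\mathrm{Cont}^{\ge p}(D_k)\subset M_\infty$ is invariant under $G_\infty$, and an orbit $O_\lambda$ ($\lambda$ a pre-partition of length at most $r$) is contained in $\mathrm{Cont}^{\ge p}(D_k)$ if and only if $\lambda_{r-k}+\dots+\lambda_r\ge p$.
   Context: $D_k$ is defined by the ideal $I_{D_k}$ of $(k+1)\times(k+1)$ minors. The $\mathbb{C}$-points of the arc space $M_\infty$ are $r\times s$ matrices over $\mathbb{C}[[t]]$; $G=GL_r\times GL_s$ acts on $M$ by $(g,h)\cdot A=gAh^{-1}$, and $G_\infty$ acts on $M_\infty$. For $\gamma\in M_\infty$ (viewed as $\mathrm{Spec}\,K[[t]]\to M$), $\mathrm{ord}_\gamma(I_{D_k})=e$ where $\gamma^*I_{D_k}=(t^e)$, $e\in\mathbb N\cup\{\infty\}$; $\mathrm{Cont}^{\ge p}(D_k)=\{\gamma:\mathrm{ord}_\gamma(I_{D_k})\ge p\}$. A pre-partition of length at most $r$ is $\lambda_1\ge\dots\ge\lambda_r\ge0$ in $\mathbb N\cup\{\infty\}$ (with $\infty>n$, $\infty+n=\infty$); $\delta_\lambda$ is the $r\times s$ matrix with first $s-r$ columns zero and last $r$ columns $\mathrm{diag}(t^{\lambda_1},\dots,t^{\lambda_r})$ ($t^\infty=0$); $O_\lambda=G_\infty\cdot\delta_\lambda$. *)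

theory Defs
  imports "Jordan_Normal_Form.DL_Submatrix" "Jordan_Normal_Form.Determinant"
    "HOL-Computational_Algebra.Formal_Power_Series" "HOL-Library.Extended_Nat"
begin

definition arcs :: "nat \<Rightarrow> nat \<Rightarrow> complex fps mat set" where
  "arcs r s = carrier_mat r s"

definition tpow :: "enat \<Rightarrow> complex fps" where
  "tpow e = (case e of enat n \<Rightarrow> fps_X ^ n | \<infinity> \<Rightarrow> 0)"

definition ideal_gen :: "'a :: comm_ring_1 set \<Rightarrow> 'a set" where
  "ideal_gen S = {x. \<exists>F c. finite F \<and> F \<subseteq> S \<and> x = (\<Sum>g\<in>F. c g * g)}"

text \<open>Generators of gamma^* I_{D_k}: the (k+1) x (k+1) minors of the matrix gamma.\<close>
definition minors :: "nat \<Rightarrow> 'a :: comm_ring_1 mat \<Rightarrow> 'a set" where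
  "minors k A = {det (submatrix A I J) | I J.
      I \<subseteq> {..<dim_row A} \<and> J \<subseteq> {..<dim_col A} \<and> card I = k + 1 \<and> card J = k + 1}"

definition ord_Dk :: "nat \<Rightarrow> complex fps mat \<Rightarrow> enat" where
  "ord_Dk k A = (THE e. ideal_gen (minors k A) = ideal_gen {tpow e})"

definition Cont_ge :: "nat \<Rightarrow> nat \<Rightarrow> nat \<Rightarrow> nat \<Rightarrow> complex fps mat set" where
  "Cont_ge r s k p = {A \<in> arcs r s. enat p \<le> ord_Dk k A}"

definition GL :: "nat \<Rightarrow> complex fps mat set" where
  "GL n = {g \<in> carrier_mat n n. invertible_mat g}"

definition act :: "nat \<Rightarrow> complex fps mat \<Rightarrow> complex fps mat \<Rightarrow> complex fps mat \<Rightarrow> complex fps mat" where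
  "act s g h A = g * A * (THE h'. h' \<in> carrier_mat s s \<and> h * h' = 1\<^sub>m s \<and> h' * h = 1\<^sub>m s)"

text \<open>Pre-partitions of length at most r, indexed 0..r-1 (lambda_{i+1} in the paper is lam i).\<close>
definition prepartition :: "nat \<Rightarrow> (nat \<Rightarrow> enat) \<Rightarrow> bool" where
  "prepartition r lam \<longleftrightarrow> (\<forall>i j. i \<le> j \<longrightarrow> j < r \<longrightarrow> lam j \<le> lam i)"

definition delta :: "nat \<Rightarrow> nat \<Rightarrow> (nat \<Rightarrow> enat) \<Rightarrow> complex fps mat" where
  "delta r s lam = mat r s (\<lambda>(i, j). if j = s - r + i then tpow (lam i) else 0)"

definition orbit :: "nat \<Rightarrow> nat \<Rightarrow> (nat \<Rightarrow> enat) \<Rightarrow> complex fps mat set" where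
  "orbit r s lam = {act s g h (delta r s lam) | g h. g \<in> GL r \<and> h \<in> GL s}"

end

theory Submission
  imports Defs
begin


lemma ideal_gen_I: "finite F \<Longrightarrow> F \<subseteq> S \<Longrightarrow> x = (\<Sum>g\<in>F. c g * g) \<Longrightarrow> x \<in> ideal_gen S"
  unfolding ideal_gen_def by (intro CollectI exI[of _ F] exI[of _ c]) simp

lemma ideal_gen_single_mem: "x \<in> ideal_gen {a} \<longleftrightarrow> a dvd x"
proof
  assume "x \<in> ideal_gen {a}"
  then obtain F c where "F \<subseteq> {a}" "x = (\<Sum>g\<in>F. c g * g)" unfolding ideal_gen_def by blast
  moreover have "a dvd (\<Sum>g\<in>F. c g * g)" if "F \<subseteq> {a}" for F
    using that by (intro dvd_sum) auto
  ultimately show "a dvd x" by auto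
next
  assume "a dvd x"
  then obtain c where "x = a * c" by (rule dvdE)
  then have "x = (\<Sum>g\<in>{a}. (\<lambda>_. c) g * g)" by (simp add: mult.commute)
  then show "x \<in> ideal_gen {a}" by (rule ideal_gen_I[rotated 2]) auto
qed

lemma ideal_gen_single: "ideal_gen {a} = {x. a dvd x}"
  using ideal_gen_single_mem by blast

lemma ideal_gen_dvd: assumes "\<forall>m\<in>S. d dvd m" "x \<in> ideal_gen S" shows "d dvd x"
proof -
  from assms(2) obtain F c where "finite F" "F \<subseteq> S" "x = (\<Sum>g\<in>F. c g * g)" unfolding ideal_gen_def by auto
  then show ?thesis using assms(1) by (auto intro!: dvd_sum)
qed

lemma ideal_gen_mem: "m \<in> S \<Longrightarrow> m \<in> ideal_gen S"
proof -
  assume "m \<in> S"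
  then show ?thesis by (intro ideal_gen_I[of "{m}" S m "\<lambda>_. 1"]) auto
qed

lemma subdegree_X_pow: "subdegree (fps_X ^ n :: complex fps) = n"
  by simp

lemma X_pow_dvd: "(fps_X ^ p :: complex fps) dvd fps_X ^ n \<longleftrightarrow> p \<le> n"
  by (subst fps_dvd_iff) auto

lemma tpow_dvd: "fps_X ^ p dvd tpow e \<longleftrightarrow> enat p \<le> e"
  by (cases e) (auto simp: tpow_def X_pow_dvd)

lemma tpow_dvd_tpow: "tpow a dvd tpow b \<longleftrightarrow> a \<le> b"
  by (cases a; cases b) (auto simp: tpow_def X_pow_dvd)

lemma tpow_add: "tpow (a + b) = tpow a * tpow b"
  by (cases a; cases b) (auto simp: tpow_def power_add)

lemma tpow_sum: "finite A \<Longrightarrow> tpow (\<Sum>i\<in>A. f i) = (\<Prod>i\<in>A. tpow (f i))"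
  by (induction A rule: finite_induct) (auto simp: tpow_add, simp add: tpow_def zero_enat_def)

lemma ideal_exists:
  fixes S :: "complex fps set"
  assumes "finite S"
  shows "\<exists>e. ideal_gen S = ideal_gen {tpow e}"
proof (cases "S \<subseteq> {0}")
  case True
  have "ideal_gen S = {0}"
  proof
    show "ideal_gen S \<subseteq> {0}" using ideal_gen_dvd[of S 0] True by auto
    show "{0} \<subseteq> ideal_gen S" using ideal_gen_I[of "{}" S 0] by auto
  qed
  then show ?thesis by (intro exI[of _ \<infinity>]) (auto simp: tpow_def ideal_gen_single)
next
  case False
  let ?T = "S - {0}"
  have ne: "?T \<noteq> {}" "finite ?T" using False assms by auto
  define n where "n = Min (subdegree ` ?T)"
  have "n \<in> subdegree ` ?T" unfolding n_def using ne by (intro Min_in) auto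
  then obtain m0 where m0T: "m0 \<in> ?T" and m0n: "subdegree m0 = n" by auto
  have m0le: "subdegree m0 \<le> subdegree m" if "m \<in> ?T" for m
  proof -
    have "subdegree m \<in> subdegree ` ?T" using that by blast
    then have "n \<le> subdegree m" unfolding n_def using ne(2) by (intro Min_le) simp_all
    then show ?thesis using m0n by simp
  qed
  have "ideal_gen S = {x. fps_X ^ n dvd x}"
  proof
    have all: "\<forall>m\<in>S. fps_X ^ n dvd m"
    proof
      fix m assume mS: "m \<in> S"
      show "fps_X ^ n dvd m"
      proof (cases "m = 0")
        case False
        then have "n \<le> subdegree m" using m0le[of m] mS m0n by simp
        moreover have "(fps_X ^ n :: complex fps) \<noteq> 0" by simp
        ultimately show ?thesis using False fps_dvd_iff[of "fps_X ^ n" m] by simp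
      qed simp
    qed
    show "ideal_gen S \<subseteq> {x. fps_X ^ n dvd x}"
    proof
      fix x assume "x \<in> ideal_gen S"
      then show "x \<in> {x. fps_X ^ n dvd x}" using ideal_gen_dvd[OF all] by simp
    qed
  next
    show "{x. fps_X ^ n dvd x} \<subseteq> ideal_gen S"
    proof
      fix x :: "complex fps" assume "x \<in> {x. fps_X ^ n dvd x}"
      then have "fps_X ^ n dvd x" by simp
      then obtain c where c: "x = fps_X ^ n * c" by (rule dvdE)
      have "m0 \<noteq> 0" using m0T by simp
      then have "m0 dvd fps_X ^ n" using fps_dvd_iff[of m0 "fps_X ^ n"] m0n by simp
      then obtain u where u: "fps_X ^ n = m0 * u" by (rule dvdE)
      have "x = (c * u) * m0" using c u by (simp add: mult.commute mult.left_commute)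
      then have "x = (\<Sum>g\<in>{m0}. (\<lambda>_. c * u) g * g)" by simp
      moreover have "m0 \<in> S" using m0T by simp
      ultimately show "x \<in> ideal_gen S" by (intro ideal_gen_I[of "{m0}" S x "\<lambda>_. c * u"]) auto
    qed
  qed
  then show ?thesis by (intro exI[of _ "enat n"]) (auto simp: tpow_def ideal_gen_single)
qed

lemma ord_char:
  fixes S :: "complex fps set"
  assumes "finite S"
  shows "enat p \<le> (THE e. ideal_gen S = ideal_gen {tpow e}) \<longleftrightarrow> (\<forall>m\<in>S. fps_X ^ p dvd m)"
proof -
  obtain e where e: "ideal_gen S = ideal_gen {tpow e}" using ideal_exists[OF assms] by blast
  have uniq: "e' = e" if eq0: "ideal_gen S = ideal_gen {tpow e'}" for e'
  proof -
    have eq: "ideal_gen {tpow e'} = ideal_gen {tpow e}" by (simp only: eq0[symmetric] e)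
    have "tpow e \<in> ideal_gen {tpow e}" by (simp add: ideal_gen_single_mem)
    then have "tpow e \<in> ideal_gen {tpow e'}" by (simp only: eq)
    then have 1: "e' \<le> e" by (simp add: ideal_gen_single_mem tpow_dvd_tpow)
    have "tpow e' \<in> ideal_gen {tpow e'}" by (simp add: ideal_gen_single_mem)
    then have "tpow e' \<in> ideal_gen {tpow e}" by (simp only: eq)
    then have 2: "e \<le> e'" by (simp add: ideal_gen_single_mem tpow_dvd_tpow)
    from 1 2 show ?thesis by (rule order_antisym)
  qed
  have the: "(THE e. ideal_gen S = ideal_gen {tpow e}) = e"
    by (rule the_equality[where P="\<lambda>e. ideal_gen S = ideal_gen {tpow e}", OF e uniq])
  show ?thesis unfolding the
  proof
    assume "enat p \<le> e"
    then have "fps_X ^ p dvd tpow e" by (simp add: tpow_dvd)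
    show "\<forall>m\<in>S. fps_X ^ p dvd m"
    proof
      fix m assume "m \<in> S"
      then have "m \<in> ideal_gen S" by (rule ideal_gen_mem)
      then have "m \<in> ideal_gen {tpow e}" unfolding e .
      then have "tpow e dvd m" by (simp add: ideal_gen_single_mem)
      then show "fps_X ^ p dvd m" using \<open>fps_X ^ p dvd tpow e\<close> by (rule dvd_trans[rotated])
    qed
  next
    assume "\<forall>m\<in>S. fps_X ^ p dvd m"
    moreover have "tpow e \<in> ideal_gen S" unfolding e by (simp add: ideal_gen_single_mem)
    ultimately have "fps_X ^ p dvd tpow e" by (rule ideal_gen_dvd)
    then show "enat p \<le> e" by (simp add: tpow_dvd)
  qed
qed

lemma finite_minors: "finite (minors k A)"
proof -
  have "minors k A \<subseteq> (\<lambda>(I,J). det (submatrix A I J)) ` (Pow {..<dim_row A} \<times> Pow {..<dim_col A})"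
    unfolding minors_def by auto
  then show ?thesis by (rule finite_subset) auto
qed

lemma ord_Dk_char: "enat p \<le> ord_Dk k A \<longleftrightarrow> (\<forall>m\<in>minors k A. fps_X ^ p dvd m)"
  unfolding ord_Dk_def by (rule ord_char[OF finite_minors])



lemma det_swap: "det (mat n n (\<lambda>(i,j). G i j)) = det (mat n n (\<lambda>(i,j). G j i))"
proof -
  have "mat n n (\<lambda>(i,j). G j i) = transpose_mat (mat n n (\<lambda>(i,j). G i j))"
    by (rule eq_matI) auto
  moreover have "mat n n (\<lambda>(i,j). G i j) \<in> carrier_mat n n" by simp
  ultimately show ?thesis using det_transpose by metis
qed

lemma pick_bij: assumes "finite I" shows "bij_betw (pick I) {..<card I} I"
proof -
  have inj: "inj_on (pick I) {..<card I}"
  proof (rule inj_onI)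
    fix i j assume i: "i \<in> {..<card I}" and j: "j \<in> {..<card I}" and eq: "pick I i = pick I j"
    show "i = j"
    proof (rule ccontr)
      assume "i \<noteq> j"
      then consider "i < j" | "j < i" by linarith
      then show False
      proof cases
        case 1 then have "pick I i < pick I j" using j by (intro pick_mono) auto
        then show False using eq by simp
      next
        case 2 then have "pick I j < pick I i" using i by (intro pick_mono) auto
        then show False using eq by simp
      qed
    qed
  qed
  have sub: "pick I ` {..<card I} \<subseteq> I" using pick_in_set by auto
  have "card (pick I ` {..<card I}) = card I" using card_image[OF inj] by simp
  then have "pick I ` {..<card I} = I" using card_subset_eq[OF assms sub] by simp
  then show ?thesis using inj unfolding bij_betw_def by simp
qed

lemma rowperm:
  fixes d :: "'a :: comm_ring_1"
  assumes inj: "inj_on f {..<n}" and img: "f ` {..<n} = I"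
    and dv: "d dvd det (mat n n (\<lambda>(i,j). F (pick I i) j))"
  shows "d dvd det (mat n n (\<lambda>(i,j). F (f i) j))"
proof -
  have fin: "finite I" using img by auto
  have cardI: "card I = n" using card_image[OF inj] img by simp
  have bij: "bij_betw (pick I) {..<n} I" using pick_bij[OF fin] cardI by simp
  have bijf: "bij_betw f {..<n} I" using inj img unfolding bij_betw_def by simp
  define p where "p i = (if i < n then the_inv_into {..<n} (pick I) (f i) else i)" for i
  have b1: "bij_betw (the_inv_into {..<n} (pick I) \<circ> f) {..<n} {..<n}"
    using bijf bij_betw_the_inv_into[OF bij] by (rule bij_betw_trans)
  have b2: "bij_betw p {..<n} {..<n}"
    using b1 by (rule bij_betw_cong[THEN iffD1, rotated]) (auto simp: p_def)
  have perm: "p permutes {0..<n}"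
    using b2 by (intro bij_imp_permutes) (auto simp: p_def atLeast0LessThan)
  have pf: "pick I (p i) = f i" if "i < n" for i
  proof -
    have "f i \<in> I" using img that by auto
    then show ?thesis using that f_the_inv_into_f_bij_betw[OF bij] by (simp add: p_def)
  qed
  have pn: "p i < n" if "i < n" for i using b2 that unfolding bij_betw_def by auto
  define A where "A = mat n n (\<lambda>(i,j). F (pick I i) j)"
  have A: "A \<in> carrier_mat n n" unfolding A_def by simp
  have "mat n n (\<lambda>(i,j). A $$ (p i, j)) = mat n n (\<lambda>(i,j). F (f i) j)"
    by (rule eq_matI) (auto simp: A_def pn pf)
  then have "det (mat n n (\<lambda>(i,j). F (f i) j)) = signof p * det A"
    using det_permute_rows[OF A perm] by simp
  then show ?thesis using dv unfolding A_def by simp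
qed


definition allGM :: "'a :: comm_ring_1 \<Rightarrow> nat \<Rightarrow> 'a mat \<Rightarrow> bool" where
  "allGM d n A \<longleftrightarrow> (\<forall>f g. inj_on f {..<n} \<longrightarrow> f ` {..<n} \<subseteq> {..<dim_row A} \<longrightarrow>
     inj_on g {..<n} \<longrightarrow> g ` {..<n} \<subseteq> {..<dim_col A} \<longrightarrow>
     d dvd det (mat n n (\<lambda>(i,j). A $$ (f i, g j))))"

lemma submatrix_eq:
  assumes "I \<subseteq> {..<dim_row A}" "J \<subseteq> {..<dim_col A}" "card I = n" "card J = n"
  shows "submatrix A I J = mat n n (\<lambda>(i,j). A $$ (pick I i, pick J j))"
proof -
  have "{i. i < dim_row A \<and> i \<in> I} = I" "{j. j < dim_col A \<and> j \<in> J} = J" using assms by auto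
  then show ?thesis unfolding submatrix_def using assms by simp
qed

lemma minors_to_GM:
  assumes "\<forall>m\<in>minors k A. d dvd m"
  shows "allGM d (Suc k) A"
  unfolding allGM_def
proof (intro allI impI)
  fix f g
  let ?n = "Suc k"
  assume f: "inj_on f {..<?n}" "f ` {..<?n} \<subseteq> {..<dim_row A}"
    and g: "inj_on g {..<?n}" "g ` {..<?n} \<subseteq> {..<dim_col A}"
  define I where "I = f ` {..<?n}"
  define J where "J = g ` {..<?n}"
  have cI: "card I = ?n" unfolding I_def using card_image[OF f(1)] by simp
  have cJ: "card J = ?n" unfolding J_def using card_image[OF g(1)] by simp
  have "det (submatrix A I J) \<in> minors k A"
    unfolding minors_def using f(2) g(2) cI cJ unfolding I_def J_def by auto
  then have "d dvd det (submatrix A I J)" using assms by blast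
  then have d0: "d dvd det (mat ?n ?n (\<lambda>(i,j). A $$ (pick I i, pick J j)))"
    using submatrix_eq[of I A J ?n] f(2) g(2) cI cJ unfolding I_def J_def by simp
  have d1: "d dvd det (mat ?n ?n (\<lambda>(i,j). (\<lambda>a j. A $$ (a, pick J j)) (f i) j))"
    by (rule rowperm[OF f(1) I_def[symmetric]]) (use d0 in simp)
  have d2: "d dvd det (mat ?n ?n (\<lambda>(i,j). (\<lambda>b i. A $$ (f i, b)) (pick J i) j))"
    using d1 det_swap[of ?n "\<lambda>i j. A $$ (f i, pick J j)"] by simp
  have d3: "d dvd det (mat ?n ?n (\<lambda>(i,j). (\<lambda>b i. A $$ (f i, b)) (g i) j))"
    by (rule rowperm[OF g(1) J_def[symmetric] d2])
  then show "d dvd det (mat ?n ?n (\<lambda>(i,j). A $$ (f i, g j)))"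
    using det_swap[of ?n "\<lambda>i j. A $$ (f i, g j)"] by simp
qed

lemma GM_to_minors:
  assumes "allGM d (Suc k) A"
  shows "\<forall>m\<in>minors k A. d dvd m"
proof
  fix m assume "m \<in> minors k A"
  then obtain I J where IJ: "m = det (submatrix A I J)" "I \<subseteq> {..<dim_row A}" "J \<subseteq> {..<dim_col A}"
    "card I = Suc k" "card J = Suc k" unfolding minors_def by auto
  have finI: "finite I" "finite J" using IJ finite_subset by blast+
  have bI: "bij_betw (pick I) {..<Suc k} I" using pick_bij[OF finI(1)] IJ by simp
  have bJ: "bij_betw (pick J) {..<Suc k} J" using pick_bij[OF finI(2)] IJ by simp
  have "d dvd det (mat (Suc k) (Suc k) (\<lambda>(i,j). A $$ (pick I i, pick J j)))"
    using assms bI bJ IJ unfolding allGM_def bij_betw_def by auto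
  then show "d dvd m" using IJ submatrix_eq[of I A J "Suc k"] by simp
qed

lemma GM_transpose:
  assumes "allGM d n A"
  shows "allGM d n (transpose_mat A)"
  unfolding allGM_def
proof (intro allI impI)
  fix f g
  assume f: "inj_on f {..<n}" "f ` {..<n} \<subseteq> {..<dim_row (transpose_mat A)}"
    and g: "inj_on g {..<n}" "g ` {..<n} \<subseteq> {..<dim_col (transpose_mat A)}"
  have "mat n n (\<lambda>(i,j). transpose_mat A $$ (f i, g j)) = mat n n (\<lambda>(i,j). A $$ (g j, f i))"
  proof (rule eq_matI)
    fix i j assume "i < dim_row (mat n n (\<lambda>(i,j). A $$ (g j, f i)))" "j < dim_col (mat n n (\<lambda>(i,j). A $$ (g j, f i)))"
    then have ij: "i < n" "j < n" by auto
    then have "f i < dim_col A" "g j < dim_row A" using f(2) g(2) by auto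
    then show "mat n n (\<lambda>(i,j). transpose_mat A $$ (f i, g j)) $$ (i, j) = mat n n (\<lambda>(i,j). A $$ (g j, f i)) $$ (i, j)"
      using ij by simp
  qed auto
  moreover have "d dvd det (mat n n (\<lambda>(i,j). A $$ (g i, f j)))"
    using assms f g unfolding allGM_def by auto
  ultimately show "d dvd det (mat n n (\<lambda>(i,j). transpose_mat A $$ (f i, g j)))"
    using det_swap[of n "\<lambda>i j. A $$ (g i, f j)"] by simp
qed


lemma CB_dvd:
  fixes d :: "'a :: comm_ring_1"
  assumes C: "C \<in> carrier_mat n m" and B: "B \<in> carrier_mat m n"
    and hyp: "\<And>h. inj_on h {0..<n} \<Longrightarrow> h ` {0..<n} \<subseteq> {0..<m} \<Longrightarrow> d dvd det (mat\<^sub>r n n (\<lambda>i. row B (h i)))"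
  shows "d dvd det (C * B)"
proof -
  let ?F = "{f. (\<forall>i\<in>{0..<n}. f i \<in> {0..<m}) \<and> (\<forall>i. i \<notin> {0..<n} \<longrightarrow> f i = i)}"
  have "det (C * B) = (\<Sum>f\<in>?F. det (mat\<^sub>r n n (\<lambda>i. C $$ (i, f i) \<cdot>\<^sub>v row B (f i))))"
    unfolding mat_mul_finsum_alt[OF C B]
    by (rule det_linear_rows_sum[of "{0..<m}" "\<lambda>i k. C $$ (i,k) \<cdot>\<^sub>v row B k" n]) (use B in auto)
  also have "d dvd \<dots>"
  proof (rule dvd_sum)
    fix f assume f: "f \<in> ?F"
    have rows: "(\<lambda>i. row B (f i)) \<in> {0..<n} \<rightarrow> carrier_vec n" using B by auto
    have eq: "det (mat\<^sub>r n n (\<lambda>i. C $$ (i, f i) \<cdot>\<^sub>v row B (f i))) =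
      prod (\<lambda>i. C $$ (i, f i)) {0..<n} * det (mat\<^sub>r n n (\<lambda>i. row B (f i)))"
      by (rule det_rows_mul[OF rows])
    show "d dvd det (mat\<^sub>r n n (\<lambda>i. C $$ (i, f i) \<cdot>\<^sub>v row B (f i)))"
    proof (cases "inj_on f {0..<n}")
      case True
      have "f ` {0..<n} \<subseteq> {0..<m}" using f by auto
      then have "d dvd det (mat\<^sub>r n n (\<lambda>i. row B (f i)))" using hyp True by blast
      then show ?thesis unfolding eq by simp
    next
      case False
      then obtain i j where ij: "i \<in> {0..<n}" "j \<in> {0..<n}" "f i = f j" "i \<noteq> j"
        unfolding inj_on_def by blast
      have "det (mat\<^sub>r n n (\<lambda>i. row B (f i))) = 0"
      proof (rule det_identical_rows[OF mat_row_carrierI ij(4)])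
        show "i < n" "j < n" using ij by auto
        show "row (mat\<^sub>r n n (\<lambda>i. row B (f i))) i = row (mat\<^sub>r n n (\<lambda>i. row B (f i))) j"
          using ij B by simp
      qed
      then show ?thesis unfolding eq by simp
    qed
  qed
  finally show ?thesis .
qed

lemma GM_mult_left:
  assumes GM: "allGM d n A" and C: "C \<in> carrier_mat r (dim_row A)"
  shows "allGM d n (C * A)"
  unfolding allGM_def
proof (intro allI impI)
  fix f g
  let ?R = "dim_row A"
  assume f: "inj_on f {..<n}" "f ` {..<n} \<subseteq> {..<dim_row (C * A)}"
    and g: "inj_on g {..<n}" "g ` {..<n} \<subseteq> {..<dim_col (C * A)}"
  have fr: "f i < r" if "i < n" for i using f(2) C that by auto
  have gc: "g j < dim_col A" if "j < n" for j using g(2) that by auto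
  define C' where "C' = mat n ?R (\<lambda>(i,l). C $$ (f i, l))"
  define A' where "A' = mat ?R n (\<lambda>(l,j). A $$ (l, g j))"
  have C': "C' \<in> carrier_mat n ?R" unfolding C'_def by simp
  have A': "A' \<in> carrier_mat ?R n" unfolding A'_def by simp
  have eq: "mat n n (\<lambda>(i,j). (C * A) $$ (f i, g j)) = C' * A'"
  proof (rule eq_matI)
    fix i j assume "i < dim_row (C' * A')" "j < dim_col (C' * A')"
    then have ij: "i < n" "j < n" using C' A' by auto
    have "(C * A) $$ (f i, g j) = row C (f i) \<bullet> col A (g j)"
      using fr[OF ij(1)] gc[OF ij(2)] C by simp
    also have "\<dots> = (\<Sum>l<?R. C $$ (f i, l) * A $$ (l, g j))"
      using fr[OF ij(1)] gc[OF ij(2)] C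
      by (simp add: scalar_prod_def lessThan_atLeast0)
    also have "\<dots> = row C' i \<bullet> col A' j"
      using ij by (simp add: scalar_prod_def C'_def A'_def lessThan_atLeast0)
    also have "\<dots> = (C' * A') $$ (i, j)" using ij C' A' by simp
    finally show "mat n n (\<lambda>(i,j). (C * A) $$ (f i, g j)) $$ (i, j) = (C' * A') $$ (i, j)"
      using ij by simp
  qed (use C' A' in auto)
  have "d dvd det (C' * A')"
  proof (rule CB_dvd[OF C' A'])
    fix h assume h: "inj_on h {0..<n}" "h ` {0..<n} \<subseteq> {0..<?R}"
    have "mat\<^sub>r n n (\<lambda>i. row A' (h i)) = mat n n (\<lambda>(i,j). A $$ (h i, g j))"
    proof (rule eq_matI)
      fix i j assume "i < dim_row (mat n n (\<lambda>(i,j). A $$ (h i, g j)))" "j < dim_col (mat n n (\<lambda>(i,j). A $$ (h i, g j)))"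
      then have ij: "i < n" "j < n" by auto
      then have "h i < ?R" using h(2) by (auto simp: image_subset_iff)
      then show "mat\<^sub>r n n (\<lambda>i. row A' (h i)) $$ (i, j) = mat n n (\<lambda>(i,j). A $$ (h i, g j)) $$ (i, j)"
        using ij A' by (simp add: A'_def)
    qed auto
    moreover have "d dvd det (mat n n (\<lambda>(i,j). A $$ (h i, g j)))"
      using GM h g unfolding allGM_def by (auto simp: atLeast0LessThan)
    ultimately show "d dvd det (mat\<^sub>r n n (\<lambda>i. row A' (h i)))" by simp
  qed
  then show "d dvd det (mat n n (\<lambda>(i,j). (C * A) $$ (f i, g j)))" unfolding eq .
qed

lemma GM_mult_right:
  assumes GM: "allGM d n A" and H: "H \<in> carrier_mat (dim_col A) c"
  shows "allGM d n (A * H)"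
proof -
  have A: "A \<in> carrier_mat (dim_row A) (dim_col A)" by simp
  have "allGM d n (transpose_mat H * transpose_mat A)"
    by (rule GM_mult_left[OF GM_transpose[OF GM]]) (use H in simp)
  then have "allGM d n (transpose_mat (transpose_mat H * transpose_mat A))" by (rule GM_transpose)
  moreover have "transpose_mat (transpose_mat H * transpose_mat A) = A * H"
    using arg_cong[OF transpose_mult[OF A H], of transpose_mat] by simp
  ultimately show ?thesis by simp
qed

lemma window_sum: "sum f {a..<a+n} = (\<Sum>i<n. f (a+i))" for a n :: nat
  by (induction n) (auto simp: add.commute)

lemma window_le:
  fixes lam :: "nat \<Rightarrow> enat" and n :: nat and S :: "nat set"
  assumes anti: "\<And>i j. i \<le> j \<Longrightarrow> j < R \<Longrightarrow> lam j \<le> lam i"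
  shows "S \<subseteq> {..<r} \<Longrightarrow> r \<le> R \<Longrightarrow> card S = n \<Longrightarrow> sum lam {r-n..<r} \<le> sum lam S"
proof (induction n arbitrary: S r)
  case 0
  then have "finite S" using finite_subset by blast
  then have "S = {}" using 0 by simp
  then show ?case by simp
next
  case (Suc n)
  have fin: "finite S" using Suc.prems(1) finite_subset by blast
  have ne: "S \<noteq> {}" using Suc.prems(3) by auto
  define m where "m = Max S"
  have mS: "m \<in> S" unfolding m_def using fin ne by simp
  have mr: "m < r" using mS Suc.prems(1) by auto
  define S' where "S' = S - {m}"
  have S'sub: "S' \<subseteq> {..<m}"
  proof
    fix x assume "x \<in> S'"
    then have "x \<in> S" "x \<noteq> m" unfolding S'_def by auto
    moreover have "x \<le> m" unfolding m_def using fin \<open>x \<in> S\<close> by simp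
    ultimately show "x \<in> {..<m}" by simp
  qed
  have cS': "card S' = n" unfolding S'_def using Suc.prems(3) mS fin by simp
  have nm: "n \<le> m" using card_mono[OF _ S'sub] cS' by simp
  have IH: "sum lam {m-n..<m} \<le> sum lam S'"
    using Suc.IH[OF S'sub _ cS'] mr Suc.prems(2) by simp
  have sumS: "sum lam S = lam m + sum lam S'"
    unfolding S'_def using fin mS by (simp add: sum.remove)
  have nr: "Suc n \<le> r" using nm mr by simp
  have w1: "sum lam {r - Suc n..<r} = lam (r - 1) + sum lam {r - Suc n..<r - 1}"
  proof -
    have "{r - Suc n..<r} = insert (r - 1) {r - Suc n..<r - 1}" using nr by auto
    then show ?thesis by simp
  qed
  have w2: "sum lam {r - Suc n..<r - 1} \<le> sum lam {m-n..<m}"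
  proof -
    have e1: "{r - Suc n..<r - 1} = {r - Suc n..<(r - Suc n) + n}" using nr by (simp add: algebra_simps)
    have e2: "{m - n..<m} = {m - n..<(m - n) + n}" using nm by simp
    have "(\<Sum>i<n. lam (r - Suc n + i)) \<le> (\<Sum>i<n. lam (m - n + i))"
    proof (rule sum_mono)
      fix i assume "i \<in> {..<n}"
      then show "lam (r - Suc n + i) \<le> lam (m - n + i)"
        using nm mr nr Suc.prems(2) by (intro anti) auto
    qed
    then show ?thesis unfolding e1 e2 window_sum .
  qed
  have l1: "lam (r - 1) \<le> lam m" using mr Suc.prems(2) by (intro anti) auto
  have "sum lam {r - Suc n..<r} \<le> lam m + sum lam S'"
    unfolding w1 using add_mono[OF l1 order.trans[OF w2 IH]] .
  then show ?case unfolding sumS .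
qed

lemma delta_index:
  "a < r \<Longrightarrow> b < s \<Longrightarrow> delta r s lam $$ (a, b) = (if b = s - r + a then tpow (lam a) else 0)"
  unfolding delta_def by simp

lemma delta_carrier: "delta r s lam \<in> carrier_mat r s"
  unfolding delta_def by simp


lemma delta_GM_iff:
  fixes lam :: "nat \<Rightarrow> enat"
  assumes rs: "r \<le> s" and kr: "k < r" and pp: "prepartition r lam"
  shows "allGM (fps_X ^ p) (Suc k) (delta r s lam) \<longleftrightarrow> enat p \<le> (\<Sum>i\<in>{r - k - 1..<r}. lam i)"
proof -
  let ?n = "Suc k"
  let ?D = "delta r s lam"
  have nr: "?n \<le> r" using kr by simp
  have rk: "r - k - 1 = r - ?n" by simp
  have wsum: "(\<Sum>i\<in>{r - k - 1..<r}. lam i) = (\<Sum>i<?n. lam (r - ?n + i))"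
  proof -
    have "{r - k - 1..<r} = {r - ?n..<(r - ?n) + ?n}" using nr by simp
    then show ?thesis by (simp only: window_sum)
  qed
  show ?thesis
  proof
    assume GM: "allGM (fps_X ^ p) (Suc k) ?D"
    define f where "f i = r - ?n + i" for i
    define g where "g i = s - ?n + i" for i
    have finj: "inj_on f {..<?n}" unfolding f_def by (rule inj_onI) simp
    have ginj: "inj_on g {..<?n}" unfolding g_def by (rule inj_onI) simp
    have fim: "f ` {..<?n} \<subseteq> {..<dim_row ?D}" using nr unfolding f_def delta_def by auto
    have gim: "g ` {..<?n} \<subseteq> {..<dim_col ?D}" using nr rs unfolding g_def delta_def by auto
    have dv: "fps_X ^ p dvd det (mat ?n ?n (\<lambda>(i,j). ?D $$ (f i, g j)))"
      using GM finj ginj fim gim unfolding allGM_def by blast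
    define M where "M = mat ?n ?n (\<lambda>(i,j). if i = j then tpow (lam (r - ?n + i)) else 0)"
    have Meq: "mat ?n ?n (\<lambda>(i,j). ?D $$ (f i, g j)) = M"
    proof (rule eq_matI)
      fix i j assume "i < dim_row M" "j < dim_col M"
      then have ij: "i < ?n" "j < ?n" unfolding M_def by auto
      have lt: "f i < r" "g j < s" using ij nr rs unfolding f_def g_def by auto
      have "g j = s - r + f i \<longleftrightarrow> j = i" using ij nr rs unfolding f_def g_def by auto
      then show "mat ?n ?n (\<lambda>(i,j). ?D $$ (f i, g j)) $$ (i, j) = M $$ (i, j)"
        using ij lt unfolding M_def by (simp add: delta_index f_def)
    qed (auto simp: M_def)
    have Mc: "M \<in> carrier_mat ?n ?n" unfolding M_def by simp
    have ut: "upper_triangular M" unfolding M_def upper_triangular_def by auto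
    have "det M = (\<Prod>i = 0..<?n. M $$ (i, i))"
      using det_upper_triangular[OF ut Mc] prod_list_diag_prod[of M] Mc by simp
    also have "\<dots> = (\<Prod>i = 0..<?n. tpow (lam (r - ?n + i)))"
      by (rule prod.cong) (auto simp: M_def)
    also have "\<dots> = tpow (\<Sum>i = 0..<?n. lam (r - ?n + i))" by (rule tpow_sum[symmetric]) simp
    also have "\<dots> = tpow (\<Sum>i\<in>{r - k - 1..<r}. lam i)" unfolding wsum by (simp add: atLeast0LessThan)
    finally have "fps_X ^ p dvd tpow (\<Sum>i\<in>{r - k - 1..<r}. lam i)" using dv Meq by simp
    then show "enat p \<le> (\<Sum>i\<in>{r - k - 1..<r}. lam i)" by (simp add: tpow_dvd)
  next
    assume hp: "enat p \<le> (\<Sum>i\<in>{r - k - 1..<r}. lam i)"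
    show "allGM (fps_X ^ p) (Suc k) ?D"
      unfolding allGM_def
    proof (intro allI impI)
      fix f g
      assume f: "inj_on f {..<?n}" "f ` {..<?n} \<subseteq> {..<dim_row ?D}"
        and g: "inj_on g {..<?n}" "g ` {..<?n} \<subseteq> {..<dim_col ?D}"
      have fr: "f i < r" if "i < ?n" for i using f(2) that unfolding delta_def by auto
      have gs: "g i < s" if "i < ?n" for i using g(2) that unfolding delta_def by auto
      let ?M = "mat ?n ?n (\<lambda>(i,j). ?D $$ (f i, g j))"
      have Mc: "?M \<in> carrier_mat ?n ?n" by simp
      have anti: "\<And>i j. i \<le> j \<Longrightarrow> j < r \<Longrightarrow> lam j \<le> lam i" using pp unfolding prepartition_def by blast
      have key: "enat p \<le> (\<Sum>a\<in>f ` {..<?n}. lam a)"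
      proof -
        have "(\<Sum>i\<in>{r - ?n..<r}. lam i) \<le> (\<Sum>a\<in>f ` {..<?n}. lam a)"
          by (rule window_le[OF anti]) (use f fr card_image[OF f(1)] in auto)
        then show ?thesis using hp rk by simp
      qed
      show "fps_X ^ p dvd det ?M"
        unfolding det_def'[OF Mc]
      proof (rule dvd_sum)
        fix q assume "q \<in> {q. q permutes {0..<?n}}"
        then have q: "q permutes {0..<?n}" by simp
        have qn: "q i < ?n" if "i < ?n" for i using permutes_in_image[OF q] that by simp
        have "fps_X ^ p dvd (\<Prod>i = 0..<?n. ?M $$ (i, q i))"
        proof (cases "\<exists>i<?n. g (q i) \<noteq> s - r + f i")
          case True
          then obtain i where i: "i < ?n" "g (q i) \<noteq> s - r + f i" by blast
          have "?M $$ (i, q i) = 0" using i qn[OF i(1)] fr[OF i(1)] gs[OF qn[OF i(1)]]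
            by (simp add: delta_index)
          then have "\<exists>a\<in>{0..<?n}. ?M $$ (a, q a) = 0" using i(1) by auto
          then have z2: "(\<Prod>i = 0..<?n. ?M $$ (i, q i)) = 0" by (rule prod_zero[rotated]) simp
          show ?thesis unfolding z2 by (rule dvd_0_right)
        next
          case False
          have "(\<Prod>i = 0..<?n. ?M $$ (i, q i)) = (\<Prod>i = 0..<?n. tpow (lam (f i)))"
          proof (rule prod.cong)
            fix i assume "i \<in> {0..<?n}"
            then have i: "i < ?n" by simp
            then show "?M $$ (i, q i) = tpow (lam (f i))"
              using False qn[OF i] fr[OF i] gs[OF qn[OF i]] by (simp add: delta_index)
          qed simp
          also have "\<dots> = tpow (\<Sum>i = 0..<?n. lam (f i))" by (rule tpow_sum[symmetric]) simp
          also have "(\<Sum>i = 0..<?n. lam (f i)) = (\<Sum>a\<in>f ` {..<?n}. lam a)"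
            using sum.reindex[OF f(1), of lam] by (simp add: atLeast0LessThan)
          finally show ?thesis using key by (simp add: tpow_dvd)
        qed
        then show "fps_X ^ p dvd signof q * (\<Prod>i = 0..<?n. ?M $$ (i, q i))" by simp
      qed
    qed
  qed
qed

lemma GL_inv:
  assumes "h \<in> GL s"
  shows "(THE h'. h' \<in> carrier_mat s s \<and> h * h' = 1\<^sub>m s \<and> h' * h = 1\<^sub>m s) \<in> carrier_mat s s"
proof -
  let ?P = "\<lambda>h'. h' \<in> carrier_mat s s \<and> h * h' = 1\<^sub>m s \<and> h' * h = 1\<^sub>m s"
  have hc: "h \<in> carrier_mat s s" and inv: "invertible_mat h" using assms unfolding GL_def by auto
  from inv obtain B where B1: "h * B = 1\<^sub>m (dim_row h)" and B2: "B * h = 1\<^sub>m (dim_row B)"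
    unfolding invertible_mat_def inverts_mat_def by blast
  have "dim_col B = s" using arg_cong[OF B1, of dim_col] hc by simp
  moreover have "dim_row B = s" using arg_cong[OF B2, of dim_col] hc by simp
  ultimately have Bc: "B \<in> carrier_mat s s" by auto
  have PB: "?P B" using Bc B1 B2 hc by auto
  have uniq: "x = B" if "?P x" for x
  proof -
    have xc: "x \<in> carrier_mat s s" and x1: "x * h = 1\<^sub>m s" using that by auto
    have "x = x * (h * B)" using xc B1 hc by simp
    also have "\<dots> = (x * h) * B" using xc hc Bc by (simp add: assoc_mult_mat)
    also have "\<dots> = B" using x1 Bc by simp
    finally show ?thesis .
  qed
  have "?P (THE h'. ?P h')" by (rule theI[of ?P B, OF PB uniq])
  then show ?thesis by simp
qed

lemma Cont_iff:
  "A \<in> Cont_ge r s k p \<longleftrightarrow> A \<in> carrier_mat r s \<and> allGM (fps_X ^ p) (Suc k) A"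
  unfolding Cont_ge_def arcs_def ord_Dk_char
  using minors_to_GM GM_to_minors by blast

lemma Cont_invariant:
  assumes "A \<in> Cont_ge r s k p" "g \<in> GL r" "h \<in> GL s"
  shows "act s g h A \<in> Cont_ge r s k p"
proof -
  let ?h' = "THE h'. h' \<in> carrier_mat s s \<and> h * h' = 1\<^sub>m s \<and> h' * h = 1\<^sub>m s"
  have A: "A \<in> carrier_mat r s" and GM: "allGM (fps_X ^ p) (Suc k) A" using assms(1) Cont_iff by auto
  have gc: "g \<in> carrier_mat r r" using assms(2) unfolding GL_def by auto
  have h': "?h' \<in> carrier_mat s s" by (rule GL_inv[OF assms(3)])
  have gA: "g * A \<in> carrier_mat r s" using gc A by simp
  have GM1: "allGM (fps_X ^ p) (Suc k) (g * A)" by (rule GM_mult_left[OF GM]) (use gc A in simp)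
  have GM2: "allGM (fps_X ^ p) (Suc k) (g * A * ?h')" by (rule GM_mult_right[OF GM1, of ?h' s]) (use gA h' A in simp)
  have "g * A * ?h' \<in> carrier_mat r s" using gA h' by simp
  then show ?thesis unfolding act_def using GM2 Cont_iff by blast
qed

lemma one_GL: "1\<^sub>m n \<in> GL n"
  unfolding GL_def invertible_mat_def inverts_mat_def square_mat.simps
  by (auto intro!: exI[of _ "1\<^sub>m n"])

theorem proposition3p3:
  fixes r s k p :: nat
  assumes "r \<le> s" and "k < r"
  shows "(\<forall>A \<in> Cont_ge r s k p. \<forall>g \<in> GL r. \<forall>h \<in> GL s. act s g h A \<in> Cont_ge r s k p)
    \<and> (\<forall>lam. prepartition r lam \<longrightarrow>
          (orbit r s lam \<subseteq> Cont_ge r s k p \<longleftrightarrow> (\<Sum>i\<in>{r - k - 1..<r}. lam i) \<ge> enat p))"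
proof (intro conjI allI impI ballI)
  fix A g h assume "A \<in> Cont_ge r s k p" "g \<in> GL r" "h \<in> GL s"
  then show "act s g h A \<in> Cont_ge r s k p" by (rule Cont_invariant)
next
  fix lam :: "nat \<Rightarrow> enat" assume pp: "prepartition r lam"
  have dC: "delta r s lam \<in> Cont_ge r s k p \<longleftrightarrow> enat p \<le> (\<Sum>i\<in>{r - k - 1..<r}. lam i)"
    using Cont_iff delta_GM_iff[OF assms pp] delta_carrier by blast
  have inv1: "(THE h'. h' \<in> carrier_mat s s \<and> (1\<^sub>m s :: complex fps mat) * h' = 1\<^sub>m s \<and> h' * 1\<^sub>m s = 1\<^sub>m s) = 1\<^sub>m s"
  proof (rule the_equality)
    have o: "(1\<^sub>m s :: complex fps mat) * 1\<^sub>m s = 1\<^sub>m s"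
      using left_mult_one_mat[OF one_carrier_mat[of s]] by simp
    show "(1\<^sub>m s :: complex fps mat) \<in> carrier_mat s s \<and> (1\<^sub>m s :: complex fps mat) * 1\<^sub>m s = 1\<^sub>m s \<and> (1\<^sub>m s :: complex fps mat) * 1\<^sub>m s = 1\<^sub>m s"
      using o by simp
  next
    fix h' :: "complex fps mat" assume "h' \<in> carrier_mat s s \<and> 1\<^sub>m s * h' = 1\<^sub>m s \<and> h' * 1\<^sub>m s = 1\<^sub>m s"
    then show "h' = 1\<^sub>m s" using left_mult_one_mat[of h' s s] by auto
  qed
  have dorb: "delta r s lam \<in> orbit r s lam"
  proof -
    have "act s (1\<^sub>m r) (1\<^sub>m s) (delta r s lam) = delta r s lam"
      unfolding act_def inv1 using delta_carrier[of r s lam] by simp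
    then show ?thesis unfolding orbit_def using one_GL by force
  qed
  show "orbit r s lam \<subseteq> Cont_ge r s k p \<longleftrightarrow> (\<Sum>i\<in>{r - k - 1..<r}. lam i) \<ge> enat p"
  proof
    assume "orbit r s lam \<subseteq> Cont_ge r s k p"
    then show "(\<Sum>i\<in>{r - k - 1..<r}. lam i) \<ge> enat p" using dorb dC by auto
  next
    assume "(\<Sum>i\<in>{r - k - 1..<r}. lam i) \<ge> enat p"
    then have "delta r s lam \<in> Cont_ge r s k p" using dC by simp
    then show "orbit r s lam \<subseteq> Cont_ge r s k p"
      unfolding orbit_def using Cont_invariant by blast
  qed
qed

end
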